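(* Let $A=(a_1,\dots,a_k)$ be a minimal telescopic sequence of positive integers (no $a_i$ is an $\mathbb{N}_0$-linear combination of the other terms). Then: (i) for all distinct $x,y,z\in\{1,\dots,k\}$, at least one of $\gcd(a_x,a_y)$, $\gcd(a_x,a_z)$, $\gcd(a_y,a_z)$ is greater than $1$; and (ii) for all distinct $x,y,z,w\in\{1,\dots,k\}$, either $\gcd(a_x,a_y)>1$ or $\gcd(a_z,a_w)>1$.
   Context: For a sequence $A=(a_1,\dots,a_k)$ of non-negative integers, let $d_i=\gcd(a_1,\dots,a_i)$ and $S_i=\langle a_1,\dots,a_i\rangle$ (the set of $\mathbb{N}_0$-linear combinations of $a_1,\dots,a_i$) for $i\in\{1,\dots,k\}$, and let $c_j=d_{j-1}/d_j$ for $j\in\{2,\dots,k\}$. The sequence $A$ is telescopic if $c_ja_j\in S_{j-1}$ for all $j\in\{2,\dots,k\}$. *)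

theory Defs
  imports Main
begin

text \<open>Sequences A = (a_1,...,a_k) are lists; the paper's index i corresponds to list
position i-1.\<close>

definition semigroup_gen :: "nat list \<Rightarrow> nat set" where
  "semigroup_gen xs = {n. \<exists>cs :: nat list. length cs = length xs \<and>
      n = (\<Sum>i<length xs. cs ! i * xs ! i)}"

definition seq_d :: "nat list \<Rightarrow> nat \<Rightarrow> nat" where
  "seq_d A i = Gcd (set (take i A))"

definition seq_S :: "nat list \<Rightarrow> nat \<Rightarrow> nat set" where
  "seq_S A i = semigroup_gen (take i A)"

definition seq_c :: "nat list \<Rightarrow> nat \<Rightarrow> nat" where
  "seq_c A j = seq_d A (j - 1) div seq_d A j"

definition telescopic :: "nat list \<Rightarrow> bool" where
  "telescopic A \<longleftrightarrow> (\<forall>j\<in>{2..length A}. seq_c A j * A ! (j - 1) \<in> seq_S A (j - 1))"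

definition minimal_seq :: "nat list \<Rightarrow> bool" where
  "minimal_seq A \<longleftrightarrow> (\<forall>i<length A. A ! i \<notin> semigroup_gen (take i A @ drop (Suc i) A))"

end

theory Submission
  imports Defs
begin

lemma sg_append:
  assumes "n \<in> semigroup_gen xs"
  shows "n \<in> semigroup_gen (xs @ ys)"
proof -
  from assms obtain cs where cs: "length cs = length xs"
    "n = (\<Sum>i<length xs. cs ! i * xs ! i)" unfolding semigroup_gen_def by auto
  define cs' where "cs' = cs @ replicate (length ys) (0::nat)"
  have "(\<Sum>i<length (xs@ys). cs' ! i * (xs@ys) ! i) = (\<Sum>i<length xs. cs' ! i * (xs@ys) ! i)"
    by (rule sum.mono_neutral_right) (auto simp: cs'_def cs nth_append)
  also have "\<dots> = n" using cs by (simp add: cs'_def nth_append)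
  finally show ?thesis unfolding semigroup_gen_def
    by (intro CollectI exI[of _ cs']) (simp add: cs'_def cs)
qed

lemma d_gt1:
  assumes pos: "\<forall>a\<in>set A. a > 0" and tele: "telescopic A" and mini: "minimal_seq A"
    and j: "1 \<le> j" "j + 1 \<le> length A"
  shows "seq_d A j > 1"
proof (rule ccontr)
  assume "\<not> seq_d A j > 1"
  moreover have "A ! 0 \<in> set (take j A)" using j
    by (metis Suc_le_eq add_lessD1 in_set_conv_nth length_take min_less_iff_conj nth_take
        One_nat_def le_neq_implies_less less_numeral_extra(3) not_less_zero trans_less_add1 zero_less_iff_neq_zero)
  hence "seq_d A j dvd A ! 0" unfolding seq_d_def by (rule Gcd_dvd)
  moreover have "A ! 0 > 0" proof -
    have "0 < length A" using j(2) by linarith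
    hence "A ! 0 \<in> set A" by (rule nth_mem)
    thus ?thesis using pos by blast
  qed
  ultimately have d1: "seq_d A j = 1"
    by (metis dvd_0_left_iff less_one linorder_neqE_nat not_gr_zero)
  have "set (take j A) \<subseteq> set (take (j+1) A)"
    by (simp add: set_take_subset_set_take)
  hence "seq_d A (j+1) dvd seq_d A j" unfolding seq_d_def by (auto simp: dvd_Gcd_iff intro: Gcd_dvd)
  hence "seq_d A (j+1) = 1" using d1 by simp
  hence "seq_c A (j+1) = 1" using d1 by (simp add: seq_c_def)
  moreover have "j + 1 \<in> {2..length A}" using j by simp
  ultimately have "seq_c A (j+1) * A ! (j + 1 - 1) \<in> seq_S A (j + 1 - 1)" "seq_c A (j+1) = 1"
    using tele unfolding telescopic_def by blast+
  hence "A ! j \<in> seq_S A j" by simp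
  hence "A ! j \<in> semigroup_gen (take j A @ drop (Suc j) A)"
    unfolding seq_S_def by (rule sg_append)
  with mini j show False unfolding minimal_seq_def by auto
qed

lemma gcd_gt1:
  assumes pos: "\<forall>a\<in>set A. a > 0" and tele: "telescopic A" and mini: "minimal_seq A"
    and pq: "p < q" "q + 1 < length A"
  shows "gcd (A ! p) (A ! q) > 1"
proof -
  have d: "seq_d A (q+1) > 1" using d_gt1[OF pos tele mini, of "q+1"] pq by simp
  have "A ! p \<in> set (take (q+1) A)" using pq
    by (auto simp: in_set_conv_nth intro!: exI[of _ p])
  moreover have "A ! q \<in> set (take (q+1) A)" using pq
    by (auto simp: in_set_conv_nth intro!: exI[of _ q])
  ultimately
  have "seq_d A (q+1) dvd A ! p" "seq_d A (q+1) dvd A ! q" unfolding seq_d_def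
    by (auto intro: Gcd_dvd)
  hence "seq_d A (q+1) dvd gcd (A ! p) (A ! q)" by simp
  moreover have "gcd (A ! p) (A ! q) > 0" using pos pq by auto
  ultimately show ?thesis using d by (meson dvd_imp_le less_le_trans)
qed

lemma gcd_gt1':
  assumes pos: "\<forall>a\<in>set A. a > 0" and tele: "telescopic A" and mini: "minimal_seq A"
    and pq: "p \<noteq> q" "p + 1 < length A" "q + 1 < length A"
  shows "gcd (A ! p) (A ! q) > 1"
proof (cases "p < q")
  case True thus ?thesis using gcd_gt1[OF pos tele mini] pq by auto
next
  case False thus ?thesis using gcd_gt1[OF pos tele mini, of q p] pq by (auto simp: gcd.commute)
qed

theorem mainTheorem12:
  fixes A :: "nat list"
  assumes pos: "\<forall>a\<in>set A. a > 0"
    and tele: "telescopic A"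
    and mini: "minimal_seq A"
  shows "(\<forall>x<length A. \<forall>y<length A. \<forall>z<length A.
            x \<noteq> y \<and> x \<noteq> z \<and> y \<noteq> z \<longrightarrow>
            gcd (A ! x) (A ! y) > 1 \<or> gcd (A ! x) (A ! z) > 1 \<or> gcd (A ! y) (A ! z) > 1)
       \<and> (\<forall>x<length A. \<forall>y<length A. \<forall>z<length A. \<forall>w<length A.
            distinct [x, y, z, w] \<longrightarrow>
            gcd (A ! x) (A ! y) > 1 \<or> gcd (A ! z) (A ! w) > 1)"
proof (intro conjI allI impI)
  note G = gcd_gt1'[OF pos tele mini]
  fix x y z assume *: "x < length A" "y < length A" "z < length A" "x \<noteq> y \<and> x \<noteq> z \<and> y \<noteq> z"
  show "gcd (A ! x) (A ! y) > 1 \<or> gcd (A ! x) (A ! z) > 1 \<or> gcd (A ! y) (A ! z) > 1"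
  proof (cases "x + 1 = length A")
    case True thus ?thesis using G[of y z] * by auto
  next
    case False
    show ?thesis
    proof (cases "y + 1 = length A")
      case True thus ?thesis using G[of x z] * False by auto
    next
      case False2: False thus ?thesis using G[of x y] * False by auto
    qed
  qed
next
  note G = gcd_gt1'[OF pos tele mini]
  fix x y z w assume *: "x < length A" "y < length A" "z < length A" "w < length A" "distinct [x, y, z, w]"
  show "gcd (A ! x) (A ! y) > 1 \<or> gcd (A ! z) (A ! w) > 1"
  proof (cases "x + 1 = length A \<or> y + 1 = length A")
    case True thus ?thesis using G[of z w] * by auto
  next
    case False thus ?thesis using G[of x y] * by auto
  qed
qed

end
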